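(* Consider $\dot{\mathbf{x}}(s)=f(\mathbf{x}(s),\mathbf{u}(s))$, $s\in[-t,0]$, $\mathbf{x}(-t)=x$, with $f$ Lipschitz in the state and measurable controls in $U\subset\mathbb{R}^{n_u}$; let $g$ be Lipschitz. Let $\mathcal{D}=\{(x_i,u_i,v_i)\}_{i=1}^N$ with $u_i\in U$, $v_i=f(x_i,u_i)$, and let $\mathcal{E}$ be a closed-valued map with $f(x,u_i)-v_i\in\mathcal{E}(x;x_i)$ for all $i$ and all $x$. Define (1) $V(x,t)=\sup_{\mathbf{u}(\cdot)}\min_{s\in[-t,0]}g(\mathbf{x}(s))$; (2) $\widetilde{V}(x,t)=\sup_{\widetilde{\mathbf{u}}(\cdot)}\min_{s\in[-t,0]}g(\widetilde{\mathbf{x}}(s))$, where $\widetilde{\mathbf{x}}$ solves the same dynamics from $x$ at time $-t$ with controls restricted to $\widetilde{\mathbf{u}}(s)\in\{u_i\}_{i=1}^N$; (3) $\widehat{V}(x,t)=\inf_{\xi_w}\sup_{\mathbf{v}(\cdot)}\min_{s\in[-t,0]}g(\widehat{\mathbf{x}}(s))$ for the game $\dot{\widehat{\mathbf{x}}}(s)=\mathbf{v}(s)+\mathbf{w}(s)$, $\widehat{\mathbf{x}}(-t)=x$, with leader action $\mathbf{v}(s)\in\{v_i\}_{i=1}^N$, follower action $\mathbf{w}(s)\in W(\widehat{\mathbf{x}}(s),\mathbf{v}(s))$ where $W(x,v_j)=\mathcal{E}(x;x_j)$, and $\xi_w$ ranging over follower non-anticipative strategies. Then $\widehat{V}(x,t)\le\widetilde{V}(x,t)\le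 V(x,t)$ for all $x\in\mathbb{R}^{n_x}$ and $t\ge0$.
   Context: A non-anticipative strategy $\xi_w$ maps leader signals $\mathbf{v}(\cdot)$ to follower signals $\mathbf{w}(\cdot)$ such that if two leader signals agree on $[-t,s]$, so do the images on $[-t,s]$. *)

theory Defs
  imports "HOL-Analysis.Analysis"
begin

(* Caratheodory solution of  x'(s) = f(x(s), u(s)) on [-t,0], x(-t) = x0,
   written as the integral equation x(s) = x0 + int_{-t}^s f(x(r),u(r)) dr. *)
definition traj :: "('a::euclidean_space \<Rightarrow> 'b \<Rightarrow> 'a) \<Rightarrow> (real \<Rightarrow> 'b) \<Rightarrow> 'a \<Rightarrow> real \<Rightarrow> (real \<Rightarrow> 'a) \<Rightarrow> bool"
  where "traj f u x0 t xs \<longleftrightarrow>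
     (\<forall>s\<in>{-t..0}. ((\<lambda>r. f (xs r) (u r)) has_integral (xs s - x0)) {-t..s})"

definition signals :: "'b::euclidean_space set \<Rightarrow> real \<Rightarrow> (real \<Rightarrow> 'b) set"
  where "signals U t = {u. u measurable_on {-t..0} \<and> (\<forall>s\<in>{-t..0}. u s \<in> U)}"

definition value_fun :: "('a::euclidean_space \<Rightarrow> 'b::euclidean_space \<Rightarrow> 'a) \<Rightarrow> 'b set \<Rightarrow> ('a \<Rightarrow> real)
     \<Rightarrow> 'a \<Rightarrow> real \<Rightarrow> ereal"
  where "value_fun f U g x0 t =
     (SUP p \<in> {(u, xs). u \<in> signals U t \<and> traj f u x0 t xs}.
        (INF s\<in>{-t..0}. ereal (g (snd p s))))"

definition nonanticipative :: "(real \<Rightarrow> 'a) set \<Rightarrow> real \<Rightarrow> ((real \<Rightarrow> 'a) \<Rightarrow> (real \<Rightarrow> 'c)) \<Rightarrow> bool"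
  where "nonanticipative L t \<xi> \<longleftrightarrow>
     (\<forall>v1\<in>L. \<forall>v2\<in>L. \<forall>s\<in>{-t..0}.
        (\<forall>r\<in>{-t..s}. v1 r = v2 r) \<longrightarrow> (\<forall>r\<in>{-t..s}. \<xi> v1 r = \<xi> v2 r))"

definition game_traj :: "'a::euclidean_space \<Rightarrow> real \<Rightarrow> (real \<Rightarrow> 'a) \<Rightarrow> (real \<Rightarrow> 'a) \<Rightarrow> real \<Rightarrow> 'a"
  where "game_traj x0 t v w s = x0 + integral {-t..s} (\<lambda>r. v r + w r)"

(* follower action set W(x, v) = E(x; x_j) for v = v_j (union over all j with v_j = v) *)
definition Wset :: "nat \<Rightarrow> (nat \<Rightarrow> 'a) \<Rightarrow> (nat \<Rightarrow> 'a) \<Rightarrow> ('a \<Rightarrow> 'a \<Rightarrow> 'a set) \<Rightarrow> 'a \<Rightarrow> 'a \<Rightarrow> 'a set"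
  where "Wset N xd vd E x v = (\<Union>j\<in>{j\<in>{1..N}. vd j = v}. E x (xd j))"

definition follower_strategies :: "nat \<Rightarrow> (nat \<Rightarrow> 'a::euclidean_space) \<Rightarrow> (nat \<Rightarrow> 'a) \<Rightarrow> ('a \<Rightarrow> 'a \<Rightarrow> 'a set)
     \<Rightarrow> 'a \<Rightarrow> real \<Rightarrow> ((real \<Rightarrow> 'a) \<Rightarrow> (real \<Rightarrow> 'a)) set"
  where "follower_strategies N xd vd E x0 t =
     {\<xi>. nonanticipative (signals (vd ` {1..N}) t) t \<xi> \<and>
          (\<forall>v\<in>signals (vd ` {1..N}) t.
             \<xi> v measurable_on {-t..0} \<and>
             (\<lambda>r. v r + \<xi> v r) integrable_on {-t..0} \<and>
             (\<forall>s\<in>{-t..0}. \<xi> v s \<in> Wset N xd vd E (game_traj x0 t v (\<xi> v) s) (v s)))}"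

definition game_value :: "nat \<Rightarrow> (nat \<Rightarrow> 'a::euclidean_space) \<Rightarrow> (nat \<Rightarrow> 'a) \<Rightarrow> ('a \<Rightarrow> 'a \<Rightarrow> 'a set)
     \<Rightarrow> ('a \<Rightarrow> real) \<Rightarrow> 'a \<Rightarrow> real \<Rightarrow> ereal"
  where "game_value N xd vd E g x0 t =
     (INF \<xi>\<in>follower_strategies N xd vd E x0 t.
        SUP v\<in>signals (vd ` {1..N}) t.
          INF s\<in>{-t..0}. ereal (g (game_traj x0 t v (\<xi> v) s)))"

end

theory Submission
  imports Defs
begin

lemma exp_int_bound:
  fixes h :: "real \<Rightarrow> 'a::euclidean_space"
  assumes hi: "h integrable_on {-t..s}" and ts: "-t \<le> s" and L: "0 \<le> L" and K: "0 < K" "2*L \<le> K"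
    and m: "0 \<le> m" and hb: "\<forall>q\<in>{-t..s}. norm (h q) \<le> L * m * exp (K*(q+t))"
  shows "norm (integral {-t..s} h) \<le> m/2 * exp (K*(s+t))"
proof -
  have d: "((\<lambda>q. L*m*exp(K*(q+t))/K) has_real_derivative L * m * exp (K*(q+t))) (at q within {-t..s})" for q
    using K by (auto intro!: derivative_eq_intros)
  have gi: "((\<lambda>q. L * m * exp (K*(q+t))) has_integral (L*m*exp(K*(s+t))/K - L*m*exp(K*(-t+t))/K)) {-t..s}"
    by (rule fundamental_theorem_of_calculus[OF ts]) (use d in \<open>auto simp: has_real_derivative_iff_has_vector_derivative\<close>)
  have "norm (integral {-t..s} h) \<le> integral {-t..s} (\<lambda>q. L * m * exp (K*(q+t)))"
    by (rule integral_norm_bound_integral[OF hi]) (use gi hb in auto)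
  also have "\<dots> = L*m*exp(K*(s+t))/K - L*m/K" using integral_unique[OF gi] by simp
  also have "\<dots> \<le> L*m*exp(K*(s+t))/K" using L m K by simp
  also have "\<dots> \<le> m/2 * exp (K*(s+t))"
  proof -
    have "L/K \<le> 1/2" using K by (simp add: divide_simps)
    then have "(L/K) * (m * exp(K*(s+t))) \<le> (1/2) * (m * exp(K*(s+t)))"
      by (rule mult_right_mono) (use m in simp)
    then show ?thesis by (simp add: field_simps)
  qed
  finally show ?thesis .
qed


lemma ode_causal:
  fixes F1 F2 :: "real \<Rightarrow> 'a \<Rightarrow> 'a::euclidean_space"
  assumes t: "0 \<le> t" and s0: "s0 \<in> {-t..0}" and L: "0 \<le> L"
    and lip: "\<forall>r\<in>{-t..0}. L-lipschitz_on UNIV (F1 r)"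
    and agree: "\<forall>r\<in>{-t..s0}. F1 r = F2 r"
    and int1: "(\<lambda>r. F1 r (X1 r)) integrable_on {-t..0}"
    and int2: "(\<lambda>r. F2 r (X2 r)) integrable_on {-t..0}"
    and c1: "continuous_on {-t..0} X1" and c2: "continuous_on {-t..0} X2"
    and sol1: "\<forall>s\<in>{-t..0}. X1 s = x + integral {-t..s} (\<lambda>r. F1 r (X1 r))"
    and sol2: "\<forall>s\<in>{-t..0}. X2 s = x + integral {-t..s} (\<lambda>r. F2 r (X2 r))"
  shows "\<forall>r\<in>{-t..s0}. X1 r = X2 r"
proof -
  define K where "K = 2*L+2"
  have K: "0 < K" "2*L \<le> K" using L by (auto simp: K_def)
  define D where "D r = exp (-(K*(r+t))) * norm (X1 r - X2 r)" for r
  have sub: "{-t..s0} \<subseteq> {-t..0}" using s0 by auto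
  have "continuous_on {-t..s0} D" unfolding D_def
    by (intro continuous_intros continuous_on_subset[OF c1 sub] continuous_on_subset[OF c2 sub])
  then obtain r0 where r0: "r0 \<in> {-t..s0}" and mx: "\<forall>r\<in>{-t..s0}. D r \<le> D r0"
    using continuous_attains_sup[of "{-t..s0}" D] s0 by auto
  define m where "m = D r0"
  have m0: "0 \<le> m" by (simp add: m_def D_def)
  have bnd: "norm (X1 q - X2 q) \<le> m * exp (K*(q+t))" if "q \<in> {-t..s0}" for q
  proof -
    have "D q \<le> m" using mx that m_def by auto
    then have "exp (K*(q+t)) * D q \<le> exp (K*(q+t)) * m" by simp
    moreover have "exp (K*(q+t)) * D q = norm (X1 q - X2 q)" unfolding D_def
      by (simp add: exp_minus)
    ultimately show ?thesis using mult_right_mono[of "D q" m "exp (K*(q+t))"] by (simp add: mult.commute)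
  qed
  have half: "D r \<le> m/2" if r: "r \<in> {-t..s0}" for r
  proof -
    have rs: "{-t..r} \<subseteq> {-t..0}" using r s0 by auto
    have i1: "(\<lambda>q. F1 q (X1 q)) integrable_on {-t..r}" by (rule integrable_on_subinterval[OF int1 rs])
    have i2: "(\<lambda>q. F2 q (X2 q)) integrable_on {-t..r}" by (rule integrable_on_subinterval[OF int2 rs])
    have "X1 r - X2 r = integral {-t..r} (\<lambda>q. F1 q (X1 q)) - integral {-t..r} (\<lambda>q. F2 q (X2 q))"
      using sol1 sol2 r s0 by auto
    also have "\<dots> = integral {-t..r} (\<lambda>q. F1 q (X1 q) - F2 q (X2 q))"
      by (rule integral_diff[symmetric, OF i1 i2])
    finally have eq: "X1 r - X2 r = integral {-t..r} (\<lambda>q. F1 q (X1 q) - F2 q (X2 q))" .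
    have "norm (integral {-t..r} (\<lambda>q. F1 q (X1 q) - F2 q (X2 q))) \<le> m/2 * exp (K*(r+t))"
    proof (rule exp_int_bound[OF integrable_diff[OF i1 i2] _ L K m0])
      show "-t \<le> r" using r by auto
      show "\<forall>q\<in>{-t..r}. norm (F1 q (X1 q) - F2 q (X2 q)) \<le> L * m * exp (K * (q + t))"
      proof
        fix q assume q: "q \<in> {-t..r}"
        then have qs: "q \<in> {-t..s0}" using r by auto
        then have "F2 q = F1 q" using agree by auto
        then have "norm (F1 q (X1 q) - F2 q (X2 q)) = dist (F1 q (X1 q)) (F1 q (X2 q))"
          by (simp add: dist_norm)
        also have "\<dots> \<le> L * dist (X1 q) (X2 q)"
          using lipschitz_onD[of L UNIV "F1 q"] lip qs sub by blast
        also have "\<dots> \<le> L * (m * exp (K*(q+t)))"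
          using bnd[OF qs] L by (simp add: dist_norm mult_left_mono)
        finally show "norm (F1 q (X1 q) - F2 q (X2 q)) \<le> L * m * exp (K * (q + t))" by simp
      qed
    qed
    with eq have "norm (X1 r - X2 r) \<le> m/2 * exp (K*(r+t))" by simp
    then have "exp (-(K*(r+t))) * norm (X1 r - X2 r) \<le> exp (-(K*(r+t))) * (m/2 * exp (K*(r+t)))"
      by (simp add: mult_left_mono)
    also have "\<dots> = m/2" by (simp add: exp_minus)
    finally show ?thesis by (simp add: D_def)
  qed
  have "m \<le> m/2" using half[OF r0] m_def by simp
  then have "m = 0" using m0 by simp
  show ?thesis
  proof
    fix r assume r: "r \<in> {-t..s0}"
    have "D r \<le> 0" using mx r \<open>m = 0\<close> m_def by auto
    then show "X1 r = X2 r" by (simp add: D_def mult_le_0_iff)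
  qed
qed


lemma ode_exists:
  fixes F :: "real \<Rightarrow> 'a \<Rightarrow> 'a::euclidean_space"
  assumes t: "0 \<le> t" and L: "0 \<le> L"
    and lip: "\<forall>r\<in>{-t..0}. L-lipschitz_on UNIV (F r)"
    and integ: "\<And>\<psi>. continuous_on {-t..0} \<psi> \<Longrightarrow> (\<lambda>r. F r (\<psi> r)) integrable_on {-t..0}"
  shows "\<exists>X. continuous_on {-t..0} X \<and> (\<forall>s\<in>{-t..0}. X s = x + integral {-t..s} (\<lambda>r. F r (X r)))"
proof -
  define K where "K = 2*L+2"
  have K: "0 < K" "2*L \<le> K" using L by (auto simp: K_def)
  define E where "E r = exp (K*(r+t))" for r
  define c where "c s = max (-t) (min 0 s)" for s :: real
  define G where "G \<phi> \<sigma> = exp (-(K*(\<sigma>+t))) *\<^sub>R (x + integral {-t..\<sigma>} (\<lambda>r. F r (E r *\<^sub>R \<phi> r)))"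
    for \<phi> :: "real \<Rightarrow> 'a" and \<sigma>
  have cin: "c s \<in> {-t..0}" for s using t by (auto simp: c_def)
  have cid: "s \<in> {-t..0} \<Longrightarrow> c s = s" for s by (auto simp: c_def)
  have cc: "continuous_on UNIV c" unfolding c_def by (intro continuous_intros)
  have intg: "(\<lambda>r. F r (E r *\<^sub>R \<phi> r)) integrable_on {-t..0}" if "continuous_on UNIV \<phi>" for \<phi>
    by (rule integ) (auto simp: E_def intro!: continuous_intros continuous_on_subset[OF that])
  have inb: "(\<lambda>s. G \<phi> (c s)) \<in> bcontfun" if ph: "continuous_on UNIV \<phi>" for \<phi>
  proof -
    have "continuous_on {-t..0} (\<lambda>\<sigma>. integral {-t..\<sigma>} (\<lambda>r. F r (E r *\<^sub>R \<phi> r)))"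
      by (rule indefinite_integral_continuous_1[OF intg[OF ph]])
    then have cG: "continuous_on {-t..0} (G \<phi>)" unfolding G_def
      by (intro continuous_intros)
    have c1: "continuous_on UNIV (\<lambda>s. G \<phi> (c s))"
      using continuous_on_compose[OF cc continuous_on_subset[OF cG]] cin by (auto simp: o_def image_subset_iff)
    have "bounded (G \<phi> ` {-t..0})" by (intro compact_imp_bounded compact_continuous_image cG) auto
    moreover have "range (\<lambda>s. G \<phi> (c s)) \<subseteq> G \<phi> ` {-t..0}" using cin by auto
    ultimately have "bounded (range (\<lambda>s. G \<phi> (c s)))" by (rule bounded_subset)
    with c1 show ?thesis by (simp add: bcontfun_def)
  qed
  define T where "T \<phi> = Bcontfun (\<lambda>s. G (apply_bcontfun \<phi>) (c s))" for \<phi> :: "real \<Rightarrow>\<^sub>C 'a"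
  have Tapp: "apply_bcontfun (T \<phi>) s = G (apply_bcontfun \<phi>) (c s)" for \<phi> s
    unfolding T_def by (subst Bcontfun_inverse[OF inb]) auto
  have contr: "dist (T \<phi>1) (T \<phi>2) \<le> 1/2 * dist \<phi>1 \<phi>2" for \<phi>1 \<phi>2
  proof (rule dist_bound)
    fix s
    define \<sigma> where "\<sigma> = c s"
    have \<sigma>: "\<sigma> \<in> {-t..0}" using cin \<sigma>_def by auto
    define d where "d = dist \<phi>1 \<phi>2"
    have d0: "0 \<le> d" by (simp add: d_def)
    have sub: "{-t..\<sigma>} \<subseteq> {-t..0}" using \<sigma> by auto
    have i1: "(\<lambda>r. F r (E r *\<^sub>R \<phi>1 r)) integrable_on {-t..\<sigma>}"
      by (rule integrable_on_subinterval[OF intg sub]) simp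
    have i2: "(\<lambda>r. F r (E r *\<^sub>R \<phi>2 r)) integrable_on {-t..\<sigma>}"
      by (rule integrable_on_subinterval[OF intg sub]) simp
    have "norm (integral {-t..\<sigma>} (\<lambda>r. F r (E r *\<^sub>R \<phi>1 r) - F r (E r *\<^sub>R \<phi>2 r))) \<le> d/2 * exp (K*(\<sigma>+t))"
    proof (rule exp_int_bound[OF integrable_diff[OF i1 i2] _ L K d0])
      show "-t \<le> \<sigma>" using \<sigma> by auto
      show "\<forall>q\<in>{-t..\<sigma>}. norm (F q (E q *\<^sub>R \<phi>1 q) - F q (E q *\<^sub>R \<phi>2 q)) \<le> L * d * exp (K * (q + t))"
      proof
        fix q assume q: "q \<in> {-t..\<sigma>}"
        then have q0: "q \<in> {-t..0}" using sub by auto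
        have "norm (F q (E q *\<^sub>R \<phi>1 q) - F q (E q *\<^sub>R \<phi>2 q)) = dist (F q (E q *\<^sub>R \<phi>1 q)) (F q (E q *\<^sub>R \<phi>2 q))"
          by (simp add: dist_norm)
        also have "\<dots> \<le> L * dist (E q *\<^sub>R \<phi>1 q) (E q *\<^sub>R \<phi>2 q)"
          using lipschitz_onD[of L UNIV "F q"] lip q0 by blast
        also have "dist (E q *\<^sub>R \<phi>1 q) (E q *\<^sub>R \<phi>2 q) = E q * dist (\<phi>1 q) (\<phi>2 q)"
        proof -
          have "dist (E q *\<^sub>R \<phi>1 q) (E q *\<^sub>R \<phi>2 q) = norm (E q *\<^sub>R (\<phi>1 q - \<phi>2 q))"
            by (simp add: dist_norm scaleR_diff_right)
          also have "\<dots> = E q * dist (\<phi>1 q) (\<phi>2 q)" by (simp add: E_def dist_norm)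
          finally show ?thesis .
        qed
        also have "L * (E q * dist (\<phi>1 q) (\<phi>2 q)) \<le> L * (E q * d)"
          using dist_bounded[of \<phi>1 q \<phi>2] L by (auto simp: d_def E_def intro!: mult_left_mono)
        finally show "norm (F q (E q *\<^sub>R \<phi>1 q) - F q (E q *\<^sub>R \<phi>2 q)) \<le> L * d * exp (K * (q + t))"
          by (simp add: E_def mult_ac)
      qed
    qed
    then have nb: "norm (integral {-t..\<sigma>} (\<lambda>r. F r (E r *\<^sub>R \<phi>1 r)) - integral {-t..\<sigma>} (\<lambda>r. F r (E r *\<^sub>R \<phi>2 r))) \<le> d/2 * exp (K*(\<sigma>+t))"
      using integral_diff[OF i1 i2] by simp
    have "dist (T \<phi>1 s) (T \<phi>2 s) = dist (G \<phi>1 \<sigma>) (G \<phi>2 \<sigma>)" by (simp add: Tapp \<sigma>_def)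
    also have "\<dots> = exp (-(K*(\<sigma>+t))) * norm (integral {-t..\<sigma>} (\<lambda>r. F r (E r *\<^sub>R \<phi>1 r)) - integral {-t..\<sigma>} (\<lambda>r. F r (E r *\<^sub>R \<phi>2 r)))"
    proof -
      have "G \<phi>1 \<sigma> - G \<phi>2 \<sigma> = exp (-(K*(\<sigma>+t))) *\<^sub>R (integral {-t..\<sigma>} (\<lambda>r. F r (E r *\<^sub>R \<phi>1 r)) - integral {-t..\<sigma>} (\<lambda>r. F r (E r *\<^sub>R \<phi>2 r)))"
        unfolding G_def by (simp add: algebra_simps)
      then show ?thesis by (simp add: dist_norm)
    qed
    also have "\<dots> \<le> exp (-(K*(\<sigma>+t))) * (d/2 * exp (K*(\<sigma>+t)))"
      by (rule mult_left_mono[OF nb]) simp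
    also have "\<dots> = 1/2 * dist \<phi>1 \<phi>2" by (simp add: exp_minus d_def)
    finally show "dist (T \<phi>1 s) (T \<phi>2 s) \<le> 1/2 * dist \<phi>1 \<phi>2" .
  qed
  obtain \<phi> where fxp: "T \<phi> = \<phi>" using banach_fix_type[of "1/2" T] contr by auto
  define X where "X r = E r *\<^sub>R apply_bcontfun \<phi> r" for r
  show ?thesis
  proof (intro exI conjI ballI)
    show "continuous_on {-t..0} X" unfolding X_def E_def by (intro continuous_intros) auto
    fix s assume s: "s \<in> {-t..0}"
    have "apply_bcontfun \<phi> s = G (apply_bcontfun \<phi>) s" using Tapp[of \<phi> s] fxp cid[OF s] by simp
    then have "X s = E s *\<^sub>R G (apply_bcontfun \<phi>) s" by (simp add: X_def)
    also have "\<dots> = x + integral {-t..s} (\<lambda>r. F r (E r *\<^sub>R \<phi> r))"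
      by (simp add: G_def E_def exp_minus)
    finally show "X s = x + integral {-t..s} (\<lambda>r. F r (X r))" by (simp add: X_def)
  qed
qed


lemma sel_val:
  fixes C :: "'a::real_normed_vector set"
  assumes "finite C" "c \<in> C" "y \<in> C"
  shows "(\<Prod>c'\<in>C-{c}. dist y c' * inverse (dist c c')) = (if y = c then 1 else 0)"
proof (cases "y = c")
  case True then show ?thesis by (simp, intro prod.neutral) (auto simp: field_simps)
next
  case False
  then have "y \<in> C - {c}" using assms by auto
  then show ?thesis using False assms(1) by (auto intro!: prod_zero)
qed

theorem theorem4:
  fixes f :: "'a::euclidean_space \<Rightarrow> 'b::euclidean_space \<Rightarrow> 'a"
    and U :: "'b set"
    and g :: "'a \<Rightarrow> real"
    and N :: nat
    and xd :: "nat \<Rightarrow> 'a" and ud :: "nat \<Rightarrow> 'b" and vd :: "nat \<Rightarrow> 'a"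
    and E :: "'a \<Rightarrow> 'a \<Rightarrow> 'a set"
    and x :: 'a and t :: real
  assumes f_lip: "\<exists>L. \<forall>u\<in>U. L-lipschitz_on UNIV (\<lambda>y. f y u)"
    and g_lip: "\<exists>L. L-lipschitz_on UNIV g"
    and data_U: "\<forall>i\<in>{1..N}. ud i \<in> U"
    and data_v: "\<forall>i\<in>{1..N}. vd i = f (xd i) (ud i)"
    and E_closed: "\<forall>y z. closed (E y z)"
    and E_bound: "\<forall>i\<in>{1..N}. \<forall>y. f y (ud i) - vd i \<in> E y (xd i)"
    and t_nonneg: "t \<ge> 0"
  shows "game_value N xd vd E g x t \<le> value_fun f (ud ` {1..N}) g x t
       \<and> value_fun f (ud ` {1..N}) g x t \<le> value_fun f U g x t"
proof
  show "value_fun f (ud ` {1..N}) g x t \<le> value_fun f U g x t"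
    unfolding value_fun_def
    by (rule SUP_subset_mono) (use data_U in \<open>auto simp: signals_def\<close>)
next
  define S where "S = {-t..0}"
  have S0: "0 \<in> S" using t_nonneg by (simp add: S_def)
  have Sl: "S \<in> sets lebesgue" by (simp add: S_def)
  define C where "C = vd ` {1..N}"
  have finC: "finite C" by (simp add: C_def)
  define J where "J c = (LEAST j. j \<in> {1..N} \<and> vd j = c)" for c
  have JC: "J c \<in> {1..N} \<and> vd (J c) = c" if "c \<in> C" for c
  proof -
    have "\<exists>j. j \<in> {1..N} \<and> vd j = c" using that by (auto simp: C_def)
    then show ?thesis unfolding J_def by (rule LeastI_ex)
  qed
  define sel where "sel c y = (\<Prod>c'\<in>C-{c}. dist y c' * inverse (dist c c'))" for c y
  have selv: "sel c y = (if y = c then 1 else 0)" if "c \<in> C" "y \<in> C" for c y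
    unfolding sel_def by (rule sel_val[OF finC that])
  have selc: "continuous_on UNIV (sel c)" for c
    unfolding sel_def by (intro continuous_intros)
  define Fv where "Fv v r y = f y (ud (J (v r)))" for v :: "real \<Rightarrow> 'a" and r y
  obtain L0 where lip0: "\<forall>u\<in>U. L0-lipschitz_on UNIV (\<lambda>y. f y u)" using f_lip by blast
  define sig where "sig = signals C t"
  have sigD: "v measurable_on S" "\<forall>s\<in>S. v s \<in> C" if "v \<in> sig" for v
    using that by (auto simp: sig_def signals_def S_def)
  have udU: "ud (J (v r)) \<in> U" if "v \<in> sig" "r \<in> S" for v r
    using JC sigD(2)[OF that(1)] that(2) data_U by auto
  have lipv: "L0-lipschitz_on UNIV (Fv v r)" if "v \<in> sig" "r \<in> S" for v r
    using lip0 udU[OF that] unfolding Fv_def by auto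
  have L0: "0 \<le> L0" if "v \<in> sig" for v
    using lipv[OF that S0] by (simp add: lipschitz_on_def)
  have vmeas: "v \<in> borel_measurable (lebesgue_on S)" if "v \<in> sig" for v
    using sigD(1)[OF that] measurable_on_iff_borel_measurable[OF Sl] by blast
  have decomp: "Fv v r y = (\<Sum>c\<in>C. sel c (v r) *\<^sub>R f y (ud (J c)))" if "v \<in> sig" "r \<in> S" for v r y
  proof -
    have vr: "v r \<in> C" using sigD(2)[OF that(1)] that(2) by auto
    have "(\<Sum>c\<in>C. sel c (v r) *\<^sub>R f y (ud (J c))) = (\<Sum>c\<in>C. if c = v r then f y (ud (J c)) else 0)"
      by (rule sum.cong) (auto simp: selv vr)
    also have "\<dots> = f y (ud (J (v r)))" using finC vr by (simp add: sum.delta')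
    finally show ?thesis by (simp add: Fv_def)
  qed
  have decompu: "ud (J (v r)) = (\<Sum>c\<in>C. sel c (v r) *\<^sub>R ud (J c))" if "v \<in> sig" "r \<in> S" for v r
  proof -
    have vr: "v r \<in> C" using sigD(2)[OF that(1)] that(2) by auto
    have "(\<Sum>c\<in>C. sel c (v r) *\<^sub>R ud (J c)) = (\<Sum>c\<in>C. if c = v r then ud (J c) else 0)"
      by (rule sum.cong) (auto simp: selv vr)
    also have "\<dots> = ud (J (v r))" using finC vr by (simp add: sum.delta')
    finally show ?thesis by simp
  qed
  have fcont: "continuous_on UNIV (\<lambda>y. f y (ud j))" if "j \<in> {1..N}" for j
    using lipschitz_on_continuous_on lip0 data_U that by blast
  have hmeas: "(\<lambda>r. Fv v r (\<psi> r)) \<in> borel_measurable (lebesgue_on S)"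
    if v: "v \<in> sig" and ps: "continuous_on S \<psi>" for v \<psi>
  proof -
    have "(\<lambda>r. \<Sum>c\<in>C. sel c (v r) *\<^sub>R f (\<psi> r) (ud (J c))) \<in> borel_measurable (lebesgue_on S)"
    proof (intro borel_measurable_sum borel_measurable_scaleR)
      fix c assume c: "c \<in> C"
      show "(\<lambda>r. sel c (v r)) \<in> borel_measurable (lebesgue_on S)"
        by (rule borel_measurable_continuous_on[OF selc vmeas[OF v]])
      have "continuous_on S (\<lambda>r. f (\<psi> r) (ud (J c)))"
        using continuous_on_compose[OF ps continuous_on_subset[OF fcont[of "J c"]]] JC[OF c]
        by (auto simp: o_def)
      then show "(\<lambda>r. f (\<psi> r) (ud (J c))) \<in> borel_measurable (lebesgue_on S)"
        by (rule continuous_imp_measurable_on_sets_lebesgue[OF _ Sl])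
    qed
    then show ?thesis
      by (subst measurable_cong[where g="\<lambda>r. \<Sum>c\<in>C. sel c (v r) *\<^sub>R f (\<psi> r) (ud (J c))"])
         (auto simp: decomp[OF v] Sl)
  qed
  have hint: "(\<lambda>r. Fv v r (\<psi> r)) integrable_on S"
    if v: "v \<in> sig" and ps: "continuous_on S \<psi>" for v \<psi>
  proof -
    have "compact (\<psi> ` S)" by (rule compact_continuous_image[OF ps]) (simp add: S_def)
    then obtain B where B: "\<forall>r\<in>S. norm (\<psi> r) \<le> B"
      using compact_imp_bounded bounded_iff by (metis image_eqI)
    define A where "A = (\<Sum>j\<in>{1..N}. norm (f 0 (ud j)))"
    show ?thesis
    proof (rule measurable_bounded_by_integrable_imp_integrable[OF hmeas[OF v ps] _ _ Sl])
      show "(\<lambda>r. A + L0 * B) integrable_on S" unfolding S_def by (rule integrable_const_ivl)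
      fix r assume r: "r \<in> S"
      have j: "J (v r) \<in> {1..N}" using JC sigD(2)[OF v] r by auto
      have "dist (Fv v r (\<psi> r)) (Fv v r 0) \<le> L0 * dist (\<psi> r) 0"
        using lipschitz_onD[OF lipv[OF v r]] by blast
      then have "norm (Fv v r (\<psi> r)) \<le> norm (Fv v r 0) + L0 * norm (\<psi> r)"
        using norm_triangle_ineq2[of "Fv v r (\<psi> r)" "Fv v r 0"] by (simp add: dist_norm)
      also have "norm (Fv v r 0) \<le> A"
        unfolding A_def Fv_def by (rule member_le_sum[OF j]) auto
      also have "L0 * norm (\<psi> r) \<le> L0 * B" using B r L0[OF v] by (simp add: mult_left_mono)
      finally show "norm (Fv v r (\<psi> r)) \<le> A + L0 * B" by simp
    qed
  qed
  have exX: "\<exists>X. continuous_on S X \<and> (\<forall>s\<in>S. X s = x + integral {-t..s} (\<lambda>r. Fv v r (X r)))"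
    if v: "v \<in> sig" for v
    using ode_exists[OF t_nonneg L0[OF v], of "Fv v" x] lipv[OF v] hint[OF v] by (auto simp: S_def)
  define Xv where "Xv v = (SOME X. continuous_on S X \<and> (\<forall>s\<in>S. X s = x + integral {-t..s} (\<lambda>r. Fv v r (X r))))" for v
  have Xv: "continuous_on S (Xv v)" "\<forall>s\<in>S. Xv v s = x + integral {-t..s} (\<lambda>r. Fv v r (Xv v r))"
    if "v \<in> sig" for v
    using someI_ex[OF exX[OF that]] unfolding Xv_def by auto
  define \<xi> where "\<xi> v r = Fv v r (Xv v r) - v r" for v r
  have gt: "game_traj x t v (\<xi> v) s = Xv v s" if "v \<in> sig" "s \<in> S" for v s
    using Xv(2)[OF that(1)] that(2) by (simp add: game_traj_def \<xi>_def)
  have xiF: "\<xi> \<in> follower_strategies N xd vd E x t"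
    unfolding follower_strategies_def mem_Collect_eq
  proof (intro conjI ballI)
    show "nonanticipative (signals (vd ` {1..N}) t) t \<xi>"
      unfolding nonanticipative_def
    proof (intro ballI impI)
      fix v1 v2 s r
      assume v1: "v1 \<in> signals (vd ` {1..N}) t" and v2: "v2 \<in> signals (vd ` {1..N}) t"
        and s: "s \<in> {-t..0}" and ag: "\<forall>r\<in>{-t..s}. v1 r = v2 r" and r: "r \<in> {-t..s}"
      have v1': "v1 \<in> sig" and v2': "v2 \<in> sig" using v1 v2 by (auto simp: sig_def C_def)
      have "\<forall>r\<in>{-t..s}. Xv v1 r = Xv v2 r"
      proof (rule ode_causal[OF t_nonneg s L0[OF v1']])
        show "\<forall>r\<in>{-t..0}. L0-lipschitz_on UNIV (Fv v1 r)" using lipv[OF v1'] by (simp add: S_def)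
        show "\<forall>r\<in>{-t..s}. Fv v1 r = Fv v2 r" using ag by (auto simp: Fv_def)
        show "(\<lambda>r. Fv v1 r (Xv v1 r)) integrable_on {-t..0}" using hint[OF v1' Xv(1)[OF v1']] by (simp add: S_def)
        show "(\<lambda>r. Fv v2 r (Xv v2 r)) integrable_on {-t..0}" using hint[OF v2' Xv(1)[OF v2']] by (simp add: S_def)
        show "continuous_on {-t..0} (Xv v1)" using Xv(1)[OF v1'] by (simp add: S_def)
        show "continuous_on {-t..0} (Xv v2)" using Xv(1)[OF v2'] by (simp add: S_def)
        show "\<forall>s\<in>{-t..0}. Xv v1 s = x + integral {-t..s} (\<lambda>r. Fv v1 r (Xv v1 r))" using Xv(2)[OF v1'] by (simp add: S_def)
        show "\<forall>s\<in>{-t..0}. Xv v2 s = x + integral {-t..s} (\<lambda>r. Fv v2 r (Xv v2 r))" using Xv(2)[OF v2'] by (simp add: S_def)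
      qed
      then show "\<xi> v1 r = \<xi> v2 r" using r ag by (simp add: \<xi>_def Fv_def)
    qed
  next
    fix v assume v0: "v \<in> signals (vd ` {1..N}) t"
    have v: "v \<in> sig" using v0 by (auto simp: sig_def C_def)
    have "(\<lambda>r. Fv v r (Xv v r) - v r) \<in> borel_measurable (lebesgue_on S)"
      by (intro borel_measurable_diff hmeas[OF v Xv(1)[OF v]] vmeas[OF v])
    then show "\<xi> v measurable_on {-t..0}"
      using measurable_on_iff_borel_measurable[OF Sl] unfolding \<xi>_def S_def by blast
    show "(\<lambda>r. v r + \<xi> v r) integrable_on {-t..0}"
      using hint[OF v Xv(1)[OF v]] by (simp add: \<xi>_def S_def)
  next
    fix v s assume v0: "v \<in> signals (vd ` {1..N}) t" and s: "s \<in> {-t..0}"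
    have v: "v \<in> sig" using v0 by (auto simp: sig_def C_def)
    have s': "s \<in> S" using s by (simp add: S_def)
    have j: "J (v s) \<in> {1..N}" "vd (J (v s)) = v s" using JC sigD(2)[OF v] s' by auto
    have "\<xi> v s \<in> E (Xv v s) (xd (J (v s)))"
      using E_bound j unfolding \<xi>_def Fv_def by metis
    then show "\<xi> v s \<in> Wset N xd vd E (game_traj x t v (\<xi> v) s) (v s)"
      unfolding Wset_def gt[OF v s'] using j by blast
  qed
  have "game_value N xd vd E g x t \<le> (SUP v\<in>sig. INF s\<in>S. ereal (g (game_traj x t v (\<xi> v) s)))"
    unfolding game_value_def by (rule INF_lower2[OF xiF]) (simp add: sig_def C_def S_def)
  also have "\<dots> \<le> value_fun f (ud ` {1..N}) g x t"
  proof (rule SUP_least)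
    fix v assume v: "v \<in> sig"
    define u where "u r = ud (J (v r))" for r
    have um: "u measurable_on {-t..0}"
    proof -
      have "(\<lambda>r. \<Sum>c\<in>C. sel c (v r) *\<^sub>R ud (J c)) \<in> borel_measurable (lebesgue_on S)"
        by (intro borel_measurable_sum borel_measurable_scaleR borel_measurable_continuous_on[OF selc vmeas[OF v]]) auto
      then have "u \<in> borel_measurable (lebesgue_on S)"
        by (subst measurable_cong[where g="\<lambda>r. \<Sum>c\<in>C. sel c (v r) *\<^sub>R ud (J c)"])
           (auto simp: decompu[OF v] Sl u_def)
      then show ?thesis using measurable_on_iff_borel_measurable[OF Sl] unfolding S_def by blast
    qed
    have usig: "u \<in> signals (ud ` {1..N}) t"
      using um JC sigD(2)[OF v] by (auto simp: signals_def u_def S_def)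
    have tr: "traj f u x t (Xv v)"
      unfolding traj_def
    proof
      fix s assume s: "s \<in> {-t..0}"
      have "(\<lambda>r. Fv v r (Xv v r)) integrable_on {-t..s}"
        by (rule integrable_on_subinterval[OF hint[OF v Xv(1)[OF v]]]) (use s in \<open>auto simp: S_def\<close>)
      then have "((\<lambda>r. Fv v r (Xv v r)) has_integral (Xv v s - x)) {-t..s}"
        using Xv(2)[OF v] s by (auto simp: S_def)
      then show "((\<lambda>r. f (Xv v r) (u r)) has_integral (Xv v s - x)) {-t..s}"
        by (simp add: Fv_def u_def)
    qed
    have "(INF s\<in>S. ereal (g (game_traj x t v (\<xi> v) s))) = (INF s\<in>{-t..0}. ereal (g (snd (u, Xv v) s)))"
      by (rule INF_cong) (auto simp: gt[OF v] S_def)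
    also have "\<dots> \<le> value_fun f (ud ` {1..N}) g x t"
      unfolding value_fun_def by (rule SUP_upper) (use usig tr in auto)
    finally show "(INF s\<in>S. ereal (g (game_traj x t v (\<xi> v) s))) \<le> value_fun f (ud ` {1..N}) g x t" .
  qed
  finally show "game_value N xd vd E g x t \<le> value_fun f (ud ` {1..N}) g x t" .
qed

end
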